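(* Let $n,m,p,N\in\mathbb{N}_+$, $B\in\mathbb{R}^{n\times m}$, $C\in\mathbb{R}^{p\times n}$ of full column rank, $x_0\in\mathbb{R}^n$, $r_1,\dots,r_N\in\mathbb{R}^p$, $r_0:=Cx_0$, and $\mathcal{S}_{\rm M1}\subseteq\mathbb{R}^{n\times n}\times\mathbb{R}^{m\times N}$. Problem (MOPUL1) is: minimize $\sum_{t=1}^N\|y_t-r_t\|_2$ over $(A,U)\in\mathcal{S}_{\rm M1}$, $U=(u_0,\dots,u_{N-1})$, where $x_t=Ax_{t-1}+Bu_{t-1}$ ($t=1,\dots,N$) and $y_t=Cx_t$; let $v^*_{\rm M1}$ be its optimal value and $\mathcal{F}^*_{\rm M1}$ its optimal solution set. Problem (AMOPUL1) is: minimize $\sum_{t=1}^N\|CAC^{\dagger}r_{t-1}+CBu_{t-1}-r_t\|_2$ over $(A,U)\in\mathcal{S}_{\rm M1}$; let $v^*_{\rm A1}$ be its optimal value. For $\epsilon=(\epsilon_1,\dots,\epsilon_N)\in\mathbb{R}^N_+$ let $\mathcal{Z}_\epsilon:=\{(A,U)\in\mathcal{S}_{\rm M1}: \hat y_0=Cx_0,\ \hat y_t=CAC^{\dagger}\hat y_{t-1}+CBu_{t-1},\ \|\hat y_t-r_t\|_2\le\epsilon_t,\ t=1,\dots,N\}$. For $(A^*,U^* )\in\mathcal{F}^*_{\rm M1}$ with $U^*=(u^*_0,\dots,u^*_{N-1})$, define $\hat y^*_0=Cx_0$, $\hat y^*_t=CA^*C^{\dagger}\hat y^*_{t-1}+CBu^*_{t-1}$,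 $\epsilon^*_t=\|\hat y^*_t-r_t\|_2$, and $\mathcal{Z}^*_{\epsilon}(A^*,U^* ):=\mathcal{Z}_{\epsilon^*}$. If (MOPUL1) is attainable (i.e., $\mathcal{F}^*_{\rm M1}\ne\emptyset$), then $$v^*_{\rm A1}\le(1+\gamma^* )v^*_{\rm M1},\qquad \gamma^*:=\inf_{(A^*,U^* )\in\mathcal{F}^*_{\rm M1}}\ \inf_{(A,U)\in\mathcal{Z}^*_{\epsilon}(A^*,U^* )}\|CAC^{\dagger}\|_2.$$
   Context: $C^{\dagger}$ is the Moore–Penrose inverse of $C$; $\|\cdot\|_2$ is the Euclidean norm for vectors and the spectral norm for matrices. In the paper $\mathcal{S}_{\rm M1}$ is assumed SD representable, though this is not used in the claim. *)

theory Defs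
  imports "HOL-Analysis.Analysis"
begin

definition mp_pinv :: "real^'n^'p \<Rightarrow> real^'p^'n" where
  "mp_pinv C = (THE X. C ** X ** C = C \<and> X ** C ** X = X \<and>
      transpose (C ** X) = C ** X \<and> transpose (X ** C) = X ** C)"

definition spec_norm :: "real^'n^'m \<Rightarrow> real" where
  "spec_norm M = onorm (\<lambda>x. M *v x)"

fun traj :: "real^'n^'n \<Rightarrow> real^'m^'n \<Rightarrow> (nat \<Rightarrow> real^'m) \<Rightarrow> real^'n \<Rightarrow> nat \<Rightarrow> real^'n" where
  "traj A B U x0 0 = x0"
| "traj A B U x0 (Suc t) = A *v traj A B U x0 t + B *v U t"

fun yhat :: "real^'n^'p \<Rightarrow> real^'n^'n \<Rightarrow> real^'m^'n \<Rightarrow> (nat \<Rightarrow> real^'m) \<Rightarrow> real^'n \<Rightarrow> nat \<Rightarrow> real^'p" where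
  "yhat C A B U x0 0 = C *v x0"
| "yhat C A B U x0 (Suc t) = (C ** A ** mp_pinv C) *v yhat C A B U x0 t + (C ** B) *v U t"

definition ref0 :: "real^'n^'p \<Rightarrow> real^'n \<Rightarrow> (nat \<Rightarrow> real^'p) \<Rightarrow> nat \<Rightarrow> real^'p" where
  "ref0 C x0 r t = (if t = 0 then C *v x0 else r t)"

definition obj_M1 where
  "obj_M1 N B C x0 r A U = (\<Sum>t=1..N. norm (C *v traj A B U x0 t - r t))"

definition obj_A1 where
  "obj_A1 N B C x0 r A U = (\<Sum>t=1..N. norm ((C ** A ** mp_pinv C) *v ref0 C x0 r (t - 1)
       + (C ** B) *v U (t - 1) - r t))"

definition F_M1 where
  "F_M1 S N B C x0 r = {(A, U) \<in> S. \<forall>(A', U') \<in> S. obj_M1 N B C x0 r A U \<le> obj_M1 N B C x0 r A' U'}"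

definition Z_eps where
  "Z_eps S N B C x0 r eps = {(A, U) \<in> S. \<forall>t \<in> {1..N}. norm (yhat C A B U x0 t - r t) \<le> eps t}"

definition eps_star where
  "eps_star B C x0 r As Us t = norm (yhat C As B Us x0 t - r t)"

end

theory Submission imports Defs begin

lemma pinv_left:
  fixes C :: "real^'n^'p"
  assumes "rank C = CARD('n)"
  shows "mp_pinv C ** C = mat 1"
proof -
  have inj: "inj ((*v) C)" using assms full_rank_injective by blast
  have ker: "\<forall>x. (transpose C ** C) *v x = 0 \<longrightarrow> x = 0"
  proof (intro allI impI)
    fix x assume h: "(transpose C ** C) *v x = 0"
    have "inner ((C *v x) v* C) x = inner (C *v x) (C *v x)" by (rule dot_lmul_matrix)
    moreover have "(C *v x) v* C = (transpose C ** C) *v x"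
      by (metis matrix_vector_mul_assoc transpose_matrix_vector)
    ultimately have "C *v x = 0" using h by simp
    then show "x = 0" using inj by (metis injD matrix_vector_mult_0_right)
  qed
  then obtain G where G: "G ** (transpose C ** C) = mat 1"
    using matrix_left_invertible_ker by blast
  then have G2: "(transpose C ** C) ** G = mat 1" using matrix_left_right_inverse by blast
  have "transpose G ** (transpose C ** C) = mat 1"
    using G2 by (metis matrix_transpose_mul transpose_mat transpose_transpose)
  then have GT: "transpose G = G"
    by (metis G2 matrix_mul_assoc matrix_mul_lid matrix_mul_rid)
  define X where "X = G ** transpose C"
  have XC: "X ** C = mat 1" using G by (simp add: X_def matrix_mul_assoc)
  have symCX: "transpose (C ** X) = C ** X"
    by (simp add: X_def matrix_transpose_mul GT matrix_mul_assoc)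
  have P: "C ** X ** C = C \<and> X ** C ** X = X \<and>
      transpose (C ** X) = C ** X \<and> transpose (X ** C) = X ** C"
    using XC symCX by (simp add: matrix_mul_assoc[symmetric])
  have U: "Y = X" if hY: "C ** Y ** C = C \<and> Y ** C ** Y = Y \<and>
      transpose (C ** Y) = C ** Y \<and> transpose (Y ** C) = Y ** C" for Y
  proof -
    have YC: "Y ** C = mat 1"
      by (metis XC hY matrix_mul_assoc matrix_mul_lid)
    have "C ** Y = transpose (C ** X ** C ** Y)" using hY
      by (metis matrix_mul_assoc P)
    also have "\<dots> = transpose (C ** Y) ** transpose (C ** X)"
      by (metis matrix_transpose_mul matrix_mul_assoc)
    also have "\<dots> = C ** Y ** C ** X" using hY symCX by (simp add: matrix_mul_assoc)
    also have "\<dots> = C ** X" using YC by (simp add: matrix_mul_assoc[symmetric])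
    finally have "C ** Y = C ** X" .
    then have "X ** C ** Y = X ** C ** X" by (simp add: matrix_mul_assoc[symmetric])
    then show ?thesis using XC by simp
  qed
  have "mp_pinv C = X" unfolding mp_pinv_def
    apply (rule the_equality)
     apply (rule P)
    apply (erule U)
    done
  then show ?thesis using XC by simp
qed
lemma yhat_traj:
  fixes C :: "real^'n^'p"
  assumes "rank C = CARD('n)"
  shows "yhat C A B U x0 t = C *v traj A B U x0 t"
proof (induction t)
  case 0 then show ?case by simp
next
  case (Suc t)
  have PC: "mp_pinv C ** C = mat 1" by (rule pinv_left[OF assms])
  have "(C ** A ** mp_pinv C) *v (C *v traj A B U x0 t) = C *v (A *v traj A B U x0 t)"
    by (simp add: matrix_vector_mul_assoc matrix_mul_assoc[symmetric] PC)
  then show ?case using Suc by (simp add: matrix_vector_right_distrib matrix_vector_mul_assoc)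
qed

lemma sum_shift:
  fixes f :: "nat \<Rightarrow> real"
  shows "(\<Sum>t=1..Suc N. (if t - 1 = 0 then 0 else f (t - 1))) = (\<Sum>t=1..N. f t)"
  by (induction N) (auto simp: sum.cl_ivl_Suc)

lemma key:
  fixes C :: "real^'n^'p" and e :: "nat \<Rightarrow> real"
  assumes N: "N \<ge> 1"
    and Z: "\<forall>t\<in>{1..N}. norm (yhat C A B U x0 t - r t) \<le> e t"
  shows "obj_A1 N B C x0 r A U \<le> (1 + spec_norm (C ** A ** mp_pinv C)) * (\<Sum>t=1..N. e t)"
proof -
  define M where "M = C ** A ** mp_pinv C"
  define k where "k = spec_norm M"
  define yh where "yh = yhat C A B U x0"
  define e' where "e' = (\<lambda>s. if s = 0 then 0 else e s)"
  have k0: "k \<ge> 0" unfolding k_def spec_norm_def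
    by (rule onorm_pos_le) simp
  have enn: "e t \<ge> 0" if "t \<in> {1..N}" for t using Z that norm_ge_zero order_trans by blast
  have hterm: "norm (M *v ref0 C x0 r (t - 1) + (C ** B) *v U (t - 1) - r t) \<le> k * e' (t - 1) + e t"
    if t: "t \<in> {1..N}" for t
  proof -
    obtain s where s: "t = Suc s" using t by (cases t) auto
    have yS: "yh (Suc s) = M *v yh s + (C ** B) *v U s" by (simp add: yh_def M_def)
    have eq: "M *v ref0 C x0 r (t - 1) + (C ** B) *v U (t - 1) - r t
        = M *v (ref0 C x0 r s - yh s) + (yh (Suc s) - r (Suc s))"
      using yS by (simp add: s matrix_vector_mult_diff_distrib algebra_simps)
    have b1: "norm (M *v (ref0 C x0 r s - yh s)) \<le> k * norm (ref0 C x0 r s - yh s)"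
      unfolding k_def spec_norm_def by (rule onorm) simp
    have b2: "norm (ref0 C x0 r s - yh s) \<le> e' s"
    proof (cases "s = 0")
      case True then show ?thesis by (simp add: ref0_def yh_def e'_def)
    next
      case False
      then have "s \<in> {1..N}" using t s by auto
      then show ?thesis using Z False by (simp add: ref0_def yh_def e'_def norm_minus_commute)
    qed
    have b3: "norm (yh (Suc s) - r (Suc s)) \<le> e t" using Z t s unfolding yh_def by (metis)
    have "norm (M *v ref0 C x0 r (t - 1) + (C ** B) *v U (t - 1) - r t)
        \<le> norm (M *v (ref0 C x0 r s - yh s)) + norm (yh (Suc s) - r (Suc s))"
      unfolding eq by (rule norm_triangle_ineq)
    also have "\<dots> \<le> k * e' s + e t"
      using b1 b2 b3 k0 by (meson add_mono mult_left_mono order_trans)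
    finally show ?thesis using s by simp
  qed
  have "obj_A1 N B C x0 r A U \<le> (\<Sum>t=1..N. k * e' (t - 1) + e t)"
    unfolding obj_A1_def M_def[symmetric] by (rule sum_mono) (rule hterm)
  also have "\<dots> = k * (\<Sum>t=1..N. e' (t - 1)) + (\<Sum>t=1..N. e t)"
    by (simp add: sum.distrib sum_distrib_left)
  also have "(\<Sum>t=1..N. e' (t - 1)) \<le> (\<Sum>t=1..N. e t)"
  proof -
    obtain N' where N': "N = Suc N'" using N by (cases N) auto
    have "(\<Sum>t=1..N. e' (t - 1)) = (\<Sum>t=1..N'. e t)"
      unfolding N' e'_def by (rule sum_shift)
    also have "\<dots> \<le> (\<Sum>t=1..N. e t)"
      by (rule sum_mono2) (use enn N' in auto)
    finally show ?thesis .
  qed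
  then have "k * (\<Sum>t=1..N. e' (t - 1)) + (\<Sum>t=1..N. e t) \<le> k * (\<Sum>t=1..N. e t) + (\<Sum>t=1..N. e t)"
    using k0 by (simp add: mult_left_mono)
  finally show ?thesis by (simp add: k_def M_def algebra_simps)
qed

theorem theorem5:
  fixes B :: "real^'m^'n" and C :: "real^'n^'p" and x0 :: "real^'n"
    and r :: "nat \<Rightarrow> real^'p" and N :: nat
    and S :: "((real^'n^'n) \<times> (nat \<Rightarrow> real^'m)) set"
  assumes "N \<ge> 1"
    and "rank C = CARD('n)"
    and "F_M1 S N B C x0 r \<noteq> {}"
  shows "(INF (A, U)\<in>S. obj_A1 N B C x0 r A U)
          \<le> (1 + (INF (As, Us)\<in>F_M1 S N B C x0 r.
                     INF (A, U)\<in>Z_eps S N B C x0 r (eps_star B C x0 r As Us). spec_norm (C ** A ** mp_pinv C)))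
            * (INF (A, U)\<in>S. obj_M1 N B C x0 r A U)"
proof -
  note N = assms(1) and rk = assms(2)
  define F where "F = F_M1 S N B C x0 r"
  define vM where "vM = (INF (A, U)\<in>S. obj_M1 N B C x0 r A U)"
  define vA where "vA = (INF (A, U)\<in>S. obj_A1 N B C x0 r A U)"
  define kk where "kk = (\<lambda>(A::real^'n^'n, U::nat \<Rightarrow> real^'m). spec_norm (C ** A ** mp_pinv C))"
  define Z where "Z = (\<lambda>(As, Us). Z_eps S N B C x0 r (eps_star B C x0 r As Us))"
  define g where "g = (INF (As, Us)\<in>F. INF (A, U)\<in>Z_eps S N B C x0 r (eps_star B C x0 r As Us). spec_norm (C ** A ** mp_pinv C))"
  have kk0: "kk p \<ge> 0" for p unfolding kk_def spec_norm_def
    by (cases p) (simp add: onorm_pos_le)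
  have bdM: "bdd_below ((\<lambda>(A, U). obj_M1 N B C x0 r A U) ` S)"
    by (rule bdd_belowI[where m=0]) (auto simp: obj_M1_def intro: sum_nonneg)
  have bdA: "bdd_below ((\<lambda>(A, U). obj_A1 N B C x0 r A U) ` S)"
    by (rule bdd_belowI[where m=0]) (auto simp: obj_A1_def intro: sum_nonneg)
  have vM_eq: "vM = obj_M1 N B C x0 r a u" if au: "(a, u) \<in> F" for a u
  proof -
    have inS: "(a, u) \<in> S" and opt: "\<And>A' U'. (A', U') \<in> S \<Longrightarrow> obj_M1 N B C x0 r a u \<le> obj_M1 N B C x0 r A' U'"
      using au by (auto simp: F_def F_M1_def)
    have "vM \<le> obj_M1 N B C x0 r a u"
      unfolding vM_def using cINF_lower[OF bdM inS] by simp
    moreover have "obj_M1 N B C x0 r a u \<le> vM"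
      unfolding vM_def using inS opt by (intro cINF_greatest) auto
    ultimately show ?thesis by simp
  qed
  obtain As0 Us0 where F0: "(As0, Us0) \<in> F" using assms(3) F_def by auto
  have vM0: "vM \<ge> 0" using vM_eq[OF F0] by (simp add: obj_M1_def sum_nonneg)
  have inZ: "(a, u) \<in> Z (a, u)" if "(a, u) \<in> F" for a u
    using that by (auto simp: Z_def Z_eps_def eps_star_def F_def F_M1_def)
  have gen: "vA \<le> (1 + kk (A, U)) * vM" if au: "(a, u) \<in> F" and AU: "(A, U) \<in> Z (a, u)" for a u A U
  proof -
    have AS: "(A, U) \<in> S" and Zc: "\<forall>t\<in>{1..N}. norm (yhat C A B U x0 t - r t) \<le> eps_star B C x0 r a u t"
      using AU by (auto simp: Z_def Z_eps_def)
    have "vA \<le> obj_A1 N B C x0 r A U"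
      unfolding vA_def using cINF_lower[OF bdA AS] by simp
    also have "\<dots> \<le> (1 + kk (A, U)) * (\<Sum>t=1..N. eps_star B C x0 r a u t)"
      unfolding kk_def using key[OF N Zc] by simp
    also have "(\<Sum>t=1..N. eps_star B C x0 r a u t) = obj_M1 N B C x0 r a u"
      by (simp add: eps_star_def obj_M1_def yhat_traj[OF rk])
    also have "\<dots> = vM" using vM_eq[OF au] by simp
    finally show ?thesis .
  qed
  have goal: "vA \<le> (1 + g) * vM"
  proof (cases "vM = 0")
    case True
    have "vA \<le> (1 + kk (As0, Us0)) * vM" using gen[OF F0 inZ[OF F0]] .
    then show ?thesis using True by simp
  next
    case False
    then have pos: "vM > 0" using vM0 by simp
    have "vA / vM - 1 \<le> g"
      unfolding g_def
    proof (rule cINF_greatest)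
      show "F \<noteq> {}" using F0 by auto
    next
      fix p assume p: "p \<in> F"
      obtain a u where pe: "p = (a, u)" by (cases p)
      show "vA / vM - 1 \<le> (case p of (As, Us) \<Rightarrow> INF (A, U)\<in>Z_eps S N B C x0 r (eps_star B C x0 r As Us). spec_norm (C ** A ** mp_pinv C))"
        unfolding pe prod.case
      proof (rule cINF_greatest)
        show "Z_eps S N B C x0 r (eps_star B C x0 r a u) \<noteq> {}"
          using inZ[of a u] p pe by (auto simp: Z_def)
      next
        fix q assume q: "q \<in> Z_eps S N B C x0 r (eps_star B C x0 r a u)"
        obtain A U where qe: "q = (A, U)" by (cases q)
        have "vA \<le> (1 + kk (A, U)) * vM" using gen[of a u A U] p pe q qe by (simp add: Z_def)
        then have "vA / vM - 1 \<le> kk (A, U)" using pos by (simp add: field_simps)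
        then show "vA / vM - 1 \<le> (case q of (A, U) \<Rightarrow> spec_norm (C ** A ** mp_pinv C))"
          by (simp add: qe kk_def)
      qed
    qed
    then have "vA / vM \<le> 1 + g" by simp
    then show ?thesis using pos by (simp add: field_simps)
  qed
  then show ?thesis unfolding vA_def vM_def g_def F_def .
qed

end
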